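(* Let $k\ge2$, and let $\mathcal P=\{p_1,\dots,p_{k^2}\}$ be a family of homogeneous real polynomials in the commuting variables $x_1,\dots,x_{2k^2}$ admitting an nc representation $p(X,Y)$ of degree $d>1$. Let $a\ne b$ and suppose $x_i$ is the $(a,a)$ entry of $X$, $x_j$ is the $(a,b)$ entry of $X$, and $x_\ell$ is the $(b,b)$ entry of $X$. If $\varphi(n,0)\ne0$ for some $n\ge2$, then exactly one polynomial of the family contains the monomials $\varphi(n,0)x_i^{n-1}x_j$ and $\varphi(n,0)x_jx_\ell^{n-1}$, and this polynomial is in position $(a,b)$ of the array $p(X,Y)$.
   Context: The family $\mathcal P$ admits an nc representation $p(X,Y)$ if there are $k\times k$ matrices $X,Y$ whose $2k^2$ entries are the variables $x_1,\dots,x_{2k^2}$, each used exactly once, and a noncommutative polynomial $p$ in two letters with real coefficients such that the matrix $p(X,Y)$ is a $k\times k$ array whose entries are $p_1,\dots,p_{k^2}$, each exactly once. $\varphi(i,j)$ is the sum of coefficients of all monomials of $p$ of degree $i$ in $X$ and $j$ in $Y$. *)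

theory Defs
  imports Complex_Main "HOL-Library.Poly_Mapping"
begin

text \<open>Commutative real polynomials in the variables x_0, x_1, x_2, ...:
  a monomial is an exponent map, a polynomial a finitely supported
  map from monomials to coefficients (with the convolution product of Poly_Mapping).\<close>
type_synonym cpoly = "(nat \<Rightarrow>\<^sub>0 nat) \<Rightarrow>\<^sub>0 real"

definition cvar :: "nat \<Rightarrow> cpoly" where
  "cvar i = Poly_Mapping.single (Poly_Mapping.single i 1) 1"

definition coeff :: "cpoly \<Rightarrow> (nat \<Rightarrow>\<^sub>0 nat) \<Rightarrow> real" where
  "coeff q m = Poly_Mapping.lookup q m"

definition mon_deg :: "(nat \<Rightarrow>\<^sub>0 nat) \<Rightarrow> nat" where
  "mon_deg m = (\<Sum>v\<in>Poly_Mapping.keys m. Poly_Mapping.lookup m v)"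

definition homogeneous :: "cpoly \<Rightarrow> bool" where
  "homogeneous q \<longleftrightarrow> (\<exists>e. \<forall>m\<in>Poly_Mapping.keys q. mon_deg m = e)"

text \<open>Noncommutative polynomials in two letters: words over bool
  (True = letter X, False = letter Y), finitely supported real coefficients.\<close>
type_synonym ncpoly = "bool list \<Rightarrow>\<^sub>0 real"

definition nc_degree :: "ncpoly \<Rightarrow> nat" where
  "nc_degree p = Max (insert 0 (length ` Poly_Mapping.keys p))"

definition phi :: "ncpoly \<Rightarrow> nat \<Rightarrow> nat \<Rightarrow> real" where
  "phi p i j = (\<Sum>w\<in>{w\<in>Poly_Mapping.keys p. length (filter id w) = i \<and> length (filter Not w) = j}. Poly_Mapping.lookup p w)"

text \<open>k x k matrices with polynomial entries, represented as functions on indices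
  below k.\<close>
type_synonym cmat = "nat \<Rightarrow> nat \<Rightarrow> cpoly"

definition mat_one :: "nat \<Rightarrow> cmat" where
  "mat_one k = (\<lambda>r s. if r = s then 1 else 0)"

definition mat_mult :: "nat \<Rightarrow> cmat \<Rightarrow> cmat \<Rightarrow> cmat" where
  "mat_mult k A B = (\<lambda>r s. \<Sum>t<k. A r t * B t s)"

fun word_eval :: "nat \<Rightarrow> cmat \<Rightarrow> cmat \<Rightarrow> bool list \<Rightarrow> cmat" where
  "word_eval k X Y [] = mat_one k"
| "word_eval k X Y (c # w) = mat_mult k (if c then X else Y) (word_eval k X Y w)"

definition nc_eval :: "nat \<Rightarrow> ncpoly \<Rightarrow> cmat \<Rightarrow> cmat \<Rightarrow> cmat" where
  "nc_eval k p X Y = (\<lambda>r s. \<Sum>w\<in>Poly_Mapping.keys p. Poly_Mapping.single 0 (Poly_Mapping.lookup p w) * word_eval k X Y w r s)"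

text \<open>The family P = (P 1, ..., P (k^2)) admits the nc representation p(X,Y),
  where X has entries x_(vx r s) and Y has entries x_(vy r s):
  the 2k^2 entries of X and Y are exactly the variables x_1..x_(2k^2), each once,
  and the entries of p(X,Y) are exactly P 1, ..., P (k^2), each once (via sigma).\<close>
definition nc_representation ::
  "nat \<Rightarrow> (nat \<Rightarrow> cpoly) \<Rightarrow> ncpoly \<Rightarrow> (nat \<Rightarrow> nat \<Rightarrow> nat) \<Rightarrow> (nat \<Rightarrow> nat \<Rightarrow> nat)
    \<Rightarrow> (nat \<times> nat \<Rightarrow> nat) \<Rightarrow> bool" where
  "nc_representation k P p vx vy \<sigma> \<longleftrightarrow>
     bij_betw (\<lambda>(b, r, s). if b then vx r s else vy r s)
       (UNIV \<times> {..<k} \<times> {..<k}) {1..2 * k^2}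
   \<and> bij_betw \<sigma> ({..<k} \<times> {..<k}) {1..k^2}
   \<and> (\<forall>r<k. \<forall>s<k. nc_eval k p (\<lambda>r s. cvar (vx r s)) (\<lambda>r s. cvar (vy r s)) r s = P (\<sigma> (r, s)))"

end

theory Submission imports Defs begin

lemma lookup_single_mult:
  fixes m M :: "'a::cancel_comm_monoid_add" and c :: "'b::semiring_0"
  shows "Poly_Mapping.lookup (Poly_Mapping.single m c * q) M = (if (\<exists>q'. M = m + q') then c * Poly_Mapping.lookup q (M - m) else 0)"
proof -
  have "Poly_Mapping.lookup (Poly_Mapping.single m c * q) M = Sum_any (\<lambda>l. (c when m = l) * Sum_any (\<lambda>q'. Poly_Mapping.lookup q q' when M = l + q'))"
    by (simp only: lookup_mult lookup_single)
  also have "\<dots> = c * Sum_any (\<lambda>q'. Poly_Mapping.lookup q q' when M = m + q')"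
    by (simp add: when_mult)
  also have "\<dots> = (if (\<exists>q'. M = m + q') then c * Poly_Mapping.lookup q (M - m) else 0)"
  proof (cases "\<exists>q'. M = m + q'")
    case True
    then obtain q0 where q0: "M = m + q0" by blast
    have "(\<lambda>q'. Poly_Mapping.lookup q q' when M = m + q') = (\<lambda>q'. Poly_Mapping.lookup q q' when q' = q0)"
      using q0 by (auto simp: when_def)
    then show ?thesis using True q0 by simp
  next
    case False
    then have "(\<lambda>q'. Poly_Mapping.lookup q q' when M = m + q') = (\<lambda>q'. 0)" by (auto simp: when_def)
    then show ?thesis using False by simp
  qed
  finally show ?thesis .
qed

lemma var_dvd:
  fixes M :: "nat \<Rightarrow>\<^sub>0 nat"
  shows "(\<exists>q'. M = Poly_Mapping.single v 1 + q') \<longleftrightarrow> 1 \<le> Poly_Mapping.lookup M v"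
proof
  assume "\<exists>q'. M = Poly_Mapping.single v 1 + q'"
  then show "1 \<le> Poly_Mapping.lookup M v" by (auto simp: lookup_add)
next
  assume a: "1 \<le> Poly_Mapping.lookup M v"
  have "M = Poly_Mapping.single v 1 + (M - Poly_Mapping.single v 1)"
    by (rule poly_mapping_eqI) (use a in \<open>auto simp: lookup_add lookup_minus lookup_single when_def\<close>)
  then show "\<exists>q'. M = Poly_Mapping.single v 1 + q'" by blast
qed

lemma lookup_cvar_mult:
  "Poly_Mapping.lookup (cvar u * q) M = (if 1 \<le> Poly_Mapping.lookup M u then Poly_Mapping.lookup q (M - Poly_Mapping.single u 1) else 0)"
  unfolding cvar_def lookup_single_mult var_dvd by simp

lemma word_eval_Cons_lookup:
  "Poly_Mapping.lookup (word_eval k (\<lambda>r s. cvar (vx r s)) (\<lambda>r s. cvar (vy r s)) (c#w) r s) M =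
   (\<Sum>t<k. if 1 \<le> Poly_Mapping.lookup M (if c then vx r t else vy r t)
      then Poly_Mapping.lookup (word_eval k (\<lambda>r s. cvar (vx r s)) (\<lambda>r s. cvar (vy r s)) w t s) (M - Poly_Mapping.single (if c then vx r t else vy r t) 1) else 0)"
proof -
  have e: "word_eval k (\<lambda>r s. cvar (vx r s)) (\<lambda>r s. cvar (vy r s)) (c#w) r s =
     (\<Sum>t<k. cvar (if c then vx r t else vy r t) * word_eval k (\<lambda>r s. cvar (vx r s)) (\<lambda>r s. cvar (vy r s)) w t s)"
    by (cases c) (simp_all add: mat_mult_def)
  show ?thesis unfolding e lookup_sum lookup_cvar_mult ..
qed

lemma inj_facts:
  assumes inj: "inj_on (\<lambda>(b, r, s). if b then vx r s else vy r s) (UNIV \<times> {..<k} \<times> {..<k})"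
    and "r < k" "s < k" "r' < k" "s' < k"
  shows "vx r s = vx r' s' \<longleftrightarrow> r = r' \<and> s = s'" and "vy r s \<noteq> vx r' s'"
proof -
  show "vx r s = vx r' s' \<longleftrightarrow> r = r' \<and> s = s'"
    using inj_onD[OF inj, of "(True, r, s)" "(True, r', s')"] assms by auto
  show "vy r s \<noteq> vx r' s'"
    using inj_onD[OF inj, of "(False, r, s)" "(True, r', s')"] assms by auto
qed

lemma single_minus_nat: "Poly_Mapping.single v (e::nat) - Poly_Mapping.single v 1 = Poly_Mapping.single v (e - 1)"
  by (rule poly_mapping_eqI) (auto simp: lookup_minus lookup_single when_def)

lemma single_eq_0_iff: "Poly_Mapping.single k v = 0 \<longleftrightarrow> v = 0"
  by (metis lookup_single_eq lookup_zero single_zero)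

lemma lemA:
  assumes inj: "inj_on (\<lambda>(b, r, s). if b then vx r s else vy r s) (UNIV \<times> {..<k} \<times> {..<k})"
    and c: "c < k"
  shows "r < k \<Longrightarrow> s < k \<Longrightarrow> Poly_Mapping.lookup (word_eval k (\<lambda>r s. cvar (vx r s)) (\<lambda>r s. cvar (vy r s)) w r s) (Poly_Mapping.single (vx c c) e)
    = (if w = replicate e True \<and> (e = 0 \<longrightarrow> r = s) \<and> (0 < e \<longrightarrow> r = c \<and> s = c) then 1 else 0)"
proof (induction w arbitrary: r e)
  case Nil
  then show ?case by (auto simp: mat_one_def lookup_one when_def single_eq_0_iff)
next
  case (Cons c' w)
  let ?W = "word_eval k (\<lambda>r s. cvar (vx r s)) (\<lambda>r s. cvar (vy r s))"
  have "\<And>t. t \<in> {..<k} \<Longrightarrow> (if 1 \<le> Poly_Mapping.lookup (Poly_Mapping.single (vx c c) e) (if c' then vx r t else vy r t)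
      then Poly_Mapping.lookup (?W w t s) (Poly_Mapping.single (vx c c) e - Poly_Mapping.single (if c' then vx r t else vy r t) 1) else 0)
    = (if t = c then (if c' \<and> r = c \<and> 1 \<le> e then Poly_Mapping.lookup (?W w c s) (Poly_Mapping.single (vx c c) (e - 1)) else 0) else 0)"
  proof -
    fix t assume t: "t \<in> {..<k}"
    show "?thesis t"
    proof -
      have u: "vx c c = (if c' then vx r t else vy r t) \<longleftrightarrow> c' \<and> r = c \<and> t = c"
        using inj_facts[OF inj, of r t c c] Cons.prems c t by (cases c') auto
      show ?thesis
      proof (cases "c' \<and> r = c \<and> t = c")
        case True
        then show ?thesis using single_minus_nat[of "vx c c" e] by (simp add: lookup_single)
      next
        case False
        then have "Poly_Mapping.lookup (Poly_Mapping.single (vx c c) e) (if c' then vx r t else vy r t) = 0"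
          using u False by (simp add: lookup_single when_def)
        then show ?thesis using False by auto
      qed
    qed
  qed
  then have "Poly_Mapping.lookup (?W (c'#w) r s) (Poly_Mapping.single (vx c c) e)
     = (if c' \<and> r = c \<and> 1 \<le> e then Poly_Mapping.lookup (?W w c s) (Poly_Mapping.single (vx c c) (e - 1)) else 0)"
    unfolding word_eval_Cons_lookup using c by (simp add: sum.delta)
  also have "\<dots> = (if c' # w = replicate e True \<and> (e = 0 \<longrightarrow> r = s) \<and> (0 < e \<longrightarrow> r = c \<and> s = c) then 1 else 0)"
    using Cons.IH[of c "e - 1"] c Cons.prems by (cases e) auto
  finally show ?case .
qed

lemma sum_two:
  assumes "a < (k::nat)" "b < k" "a \<noteq> b"
  shows "(\<Sum>t<k. if t = a then A else if t = b then B else 0) = A + (B::real)"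
proof -
  have "(\<Sum>t<k. if t = a then A else if t = b then B else 0) = (\<Sum>t<k. (if t = a then A else 0) + (if t = b then B else 0))"
    using assms by (intro sum.cong) auto
  also have "\<dots> = A + B" using assms by (simp add: sum.distrib)
  finally show ?thesis .
qed

lemma lemB:
  assumes inj: "inj_on (\<lambda>(b, r, s). if b then vx r s else vy r s) (UNIV \<times> {..<k} \<times> {..<k})"
    and ab: "a < k" "b < k" "a \<noteq> b"
  shows "r < k \<Longrightarrow> s < k \<Longrightarrow> Poly_Mapping.lookup (word_eval k (\<lambda>r s. cvar (vx r s)) (\<lambda>r s. cvar (vy r s)) w r s)
      (Poly_Mapping.single (vx a a) e + Poly_Mapping.single (vx a b) 1)
    = (if w = replicate (Suc e) True \<and> r = a \<and> s = b then 1 else 0)"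
proof (induction w arbitrary: r e)
  case Nil
  have "Poly_Mapping.single (vx a a) e + Poly_Mapping.single (vx a b) 1 \<noteq> 0"
    by (metis add_is_0 lookup_add lookup_single_eq lookup_zero one_neq_zero)
  then show ?case by (auto simp: mat_one_def lookup_one when_def)
next
  case (Cons c' w)
  let ?W = "word_eval k (\<lambda>r s. cvar (vx r s)) (\<lambda>r s. cvar (vy r s))"
  let ?M = "Poly_Mapping.single (vx a a) e + Poly_Mapping.single (vx a b) 1"
  have ij: "vx a a \<noteq> vx a b" using inj_facts[OF inj, of a a a b] ab by auto
  have m1: "?M - Poly_Mapping.single (vx a a) 1 = Poly_Mapping.single (vx a a) (e - 1) + Poly_Mapping.single (vx a b) 1" if "1 \<le> e"
    by (rule poly_mapping_eqI) (use ij that in \<open>auto simp: lookup_minus lookup_add lookup_single when_def\<close>)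
  have m2: "?M - Poly_Mapping.single (vx a b) 1 = Poly_Mapping.single (vx a a) e"
    by (rule poly_mapping_eqI) (use ij in \<open>auto simp: lookup_minus lookup_add lookup_single when_def\<close>)
  have "\<And>t. t \<in> {..<k} \<Longrightarrow> (if 1 \<le> Poly_Mapping.lookup ?M (if c' then vx r t else vy r t)
      then Poly_Mapping.lookup (?W w t s) (?M - Poly_Mapping.single (if c' then vx r t else vy r t) 1) else 0)
    = (if t = a then (if c' \<and> r = a \<and> 1 \<le> e then Poly_Mapping.lookup (?W w a s) (Poly_Mapping.single (vx a a) (e - 1) + Poly_Mapping.single (vx a b) 1) else 0)
       else if t = b then (if c' \<and> r = a then Poly_Mapping.lookup (?W w b s) (Poly_Mapping.single (vx a a) e) else 0) else 0)"
  proof -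
    fix t assume t: "t \<in> {..<k}"
    have u1: "vx a a = (if c' then vx r t else vy r t) \<longleftrightarrow> c' \<and> r = a \<and> t = a"
      using inj_facts[OF inj, of r t a a] Cons.prems ab t by (cases c') auto
    have u2: "vx a b = (if c' then vx r t else vy r t) \<longleftrightarrow> c' \<and> r = a \<and> t = b"
      using inj_facts[OF inj, of r t a b] Cons.prems ab t by (cases c') auto
    show "?thesis t"
    proof (cases "c' \<and> r = a \<and> t = a")
      case True
      then have "Poly_Mapping.lookup ?M (if c' then vx r t else vy r t) = e" using ij by (simp add: lookup_add lookup_single)
      then show ?thesis using True m1 by auto
    next
      case False
      note F1 = False
      show ?thesis
      proof (cases "c' \<and> r = a \<and> t = b")
        case True
        then have "Poly_Mapping.lookup ?M (if c' then vx r t else vy r t) = 1" using ij by (simp add: lookup_add lookup_single)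
        then show ?thesis using True m2 ab by auto
      next
        case False
        then have "Poly_Mapping.lookup ?M (if c' then vx r t else vy r t) = 0"
          using u1 u2 F1 by (simp add: lookup_add lookup_single when_def)
        then show ?thesis using False F1 by auto
      qed
    qed
  qed
  then have "Poly_Mapping.lookup (?W (c'#w) r s) ?M
     = (\<Sum>t<k. if t = a then (if c' \<and> r = a \<and> 1 \<le> e then Poly_Mapping.lookup (?W w a s) (Poly_Mapping.single (vx a a) (e - 1) + Poly_Mapping.single (vx a b) 1) else 0)
       else if t = b then (if c' \<and> r = a then Poly_Mapping.lookup (?W w b s) (Poly_Mapping.single (vx a a) e) else 0) else 0)"
    unfolding word_eval_Cons_lookup by (rule sum.cong[OF refl])
  also have "\<dots> = (if c' \<and> r = a \<and> 1 \<le> e then Poly_Mapping.lookup (?W w a s) (Poly_Mapping.single (vx a a) (e - 1) + Poly_Mapping.single (vx a b) 1) else 0)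
       + (if c' \<and> r = a then Poly_Mapping.lookup (?W w b s) (Poly_Mapping.single (vx a a) e) else 0)"
    by (rule sum_two[OF ab])
  also have "\<dots> = (if c' # w = replicate (Suc e) True \<and> r = a \<and> s = b then 1 else 0)"
    using Cons.IH[of a "e - 1"] lemA[OF inj ab(1), of b s w e] ab Cons.prems by (cases e) auto
  finally show ?case .
qed

lemma lemC:
  assumes inj: "inj_on (\<lambda>(b, r, s). if b then vx r s else vy r s) (UNIV \<times> {..<k} \<times> {..<k})"
    and ab: "a < k" "b < k" "a \<noteq> b"
  shows "r < k \<Longrightarrow> s < k \<Longrightarrow> Poly_Mapping.lookup (word_eval k (\<lambda>r s. cvar (vx r s)) (\<lambda>r s. cvar (vy r s)) w r s)
      (Poly_Mapping.single (vx a b) 1 + Poly_Mapping.single (vx b b) e)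
    = (if w = replicate (Suc e) True \<and> r = a \<and> s = b then 1 else 0)"
proof (induction w arbitrary: r e)
  case Nil
  have "Poly_Mapping.single (vx a b) 1 + Poly_Mapping.single (vx b b) e \<noteq> 0"
    by (metis add_is_0 lookup_add lookup_single_eq lookup_zero one_neq_zero)
  then show ?case by (auto simp: mat_one_def lookup_one when_def)
next
  case (Cons c' w)
  let ?W = "word_eval k (\<lambda>r s. cvar (vx r s)) (\<lambda>r s. cvar (vy r s))"
  let ?M = "Poly_Mapping.single (vx a b) 1 + Poly_Mapping.single (vx b b) e"
  have ij: "vx a b \<noteq> vx b b" using inj_facts[OF inj, of a b b b] ab by auto
  have m1: "?M - Poly_Mapping.single (vx b b) 1 = Poly_Mapping.single (vx a b) 1 + Poly_Mapping.single (vx b b) (e - 1)" if "1 \<le> e"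
    by (rule poly_mapping_eqI) (use ij that in \<open>auto simp: lookup_minus lookup_add lookup_single when_def\<close>)
  have m2: "?M - Poly_Mapping.single (vx a b) 1 = Poly_Mapping.single (vx b b) e"
    by (rule poly_mapping_eqI) (use ij in \<open>auto simp: lookup_minus lookup_add lookup_single when_def\<close>)
  have "\<And>t. t \<in> {..<k} \<Longrightarrow> (if 1 \<le> Poly_Mapping.lookup ?M (if c' then vx r t else vy r t)
      then Poly_Mapping.lookup (?W w t s) (?M - Poly_Mapping.single (if c' then vx r t else vy r t) 1) else 0)
    = (if t = b then (if c' \<and> r = a then Poly_Mapping.lookup (?W w b s) (Poly_Mapping.single (vx b b) e)
        else if c' \<and> r = b \<and> 1 \<le> e then Poly_Mapping.lookup (?W w b s) (Poly_Mapping.single (vx a b) 1 + Poly_Mapping.single (vx b b) (e - 1)) else 0) else 0)"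
  proof -
    fix t assume t: "t \<in> {..<k}"
    have u1: "vx a b = (if c' then vx r t else vy r t) \<longleftrightarrow> c' \<and> r = a \<and> t = b"
      using inj_facts[OF inj, of r t a b] Cons.prems ab t by (cases c') auto
    have u2: "vx b b = (if c' then vx r t else vy r t) \<longleftrightarrow> c' \<and> r = b \<and> t = b"
      using inj_facts[OF inj, of r t b b] Cons.prems ab t by (cases c') auto
    show "?thesis t"
    proof (cases "c' \<and> r = a \<and> t = b")
      case True
      then have "Poly_Mapping.lookup ?M (if c' then vx r t else vy r t) = 1" using ij by (simp add: lookup_add lookup_single)
      then show ?thesis using True m2 ab by auto
    next
      case False
      note F1 = False
      show ?thesis
      proof (cases "c' \<and> r = b \<and> t = b")
        case True
        then have "Poly_Mapping.lookup ?M (if c' then vx r t else vy r t) = e" using ij by (simp add: lookup_add lookup_single)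
        then show ?thesis using True m1 ab by auto
      next
        case False
        then have "Poly_Mapping.lookup ?M (if c' then vx r t else vy r t) = 0"
          using u1 u2 F1 False by (simp add: lookup_add lookup_single when_def)
        then show ?thesis using False F1 by auto
      qed
    qed
  qed
  then have "Poly_Mapping.lookup (?W (c'#w) r s) ?M
     = (\<Sum>t<k. if t = b then (if c' \<and> r = a then Poly_Mapping.lookup (?W w b s) (Poly_Mapping.single (vx b b) e)
        else if c' \<and> r = b \<and> 1 \<le> e then Poly_Mapping.lookup (?W w b s) (Poly_Mapping.single (vx a b) 1 + Poly_Mapping.single (vx b b) (e - 1)) else 0) else 0)"
    unfolding word_eval_Cons_lookup by (rule sum.cong[OF refl])
  also have "\<dots> = (if c' \<and> r = a then Poly_Mapping.lookup (?W w b s) (Poly_Mapping.single (vx b b) e)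
        else if c' \<and> r = b \<and> 1 \<le> e then Poly_Mapping.lookup (?W w b s) (Poly_Mapping.single (vx a b) 1 + Poly_Mapping.single (vx b b) (e - 1)) else 0)"
    using ab by simp
  also have "\<dots> = (if c' # w = replicate (Suc e) True \<and> r = a \<and> s = b then 1 else 0)"
    using Cons.IH[of b "e - 1"] lemA[OF inj ab(2), of b s w e] ab Cons.prems by (cases e) auto
  finally show ?case .
qed

lemma filt_rep: "(length (filter id w) = n \<and> length (filter Not w) = 0) \<longleftrightarrow> w = replicate n True"
proof
  assume h: "length (filter id w) = n \<and> length (filter Not w) = 0"
  then have all: "\<forall>x\<in>set w. x" by (auto simp: filter_empty_conv)
  then have "filter id w = w" by (auto simp: filter_id_conv)
  with h have "length w = n" by simp
  with all show "w = replicate n True" by (metis replicate_length_same)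
next
  assume "w = replicate n True"
  then show "length (filter id w) = n \<and> length (filter Not w) = 0" by simp
qed

lemma phi_eq: "phi p n 0 = Poly_Mapping.lookup p (replicate n True)"
proof -
  have "{w\<in>Poly_Mapping.keys p. length (filter id w) = n \<and> length (filter Not w) = 0}
      = Poly_Mapping.keys p \<inter> {replicate n True}"
    using filt_rep by blast
  then show ?thesis unfolding phi_def
    apply (simp only:)
    by (cases "replicate n True \<in> Poly_Mapping.keys p") (auto simp: not_in_keys_iff_lookup_eq_zero)
qed

lemma coeff_eval:
  assumes h: "\<And>w. Poly_Mapping.lookup (word_eval k X Y w r s) M = (if w = w0 \<and> r = a \<and> s = b then 1 else 0)"
  shows "Poly_Mapping.lookup (nc_eval k p X Y r s) M = (if r = a \<and> s = b then Poly_Mapping.lookup p w0 else 0)"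
proof -
  have "Poly_Mapping.lookup (nc_eval k p X Y r s) M
      = (\<Sum>w\<in>Poly_Mapping.keys p. Poly_Mapping.lookup p w * (if w = w0 \<and> r = a \<and> s = b then 1 else 0))"
    unfolding nc_eval_def lookup_sum lookup_single_mult by (simp add: h)
  also have "\<dots> = (\<Sum>w\<in>Poly_Mapping.keys p. if r = a \<and> s = b then (if w = w0 then Poly_Mapping.lookup p w else 0) else 0)"
    by (intro sum.cong) auto
  also have "\<dots> = (if r = a \<and> s = b then Poly_Mapping.lookup p w0 else 0)"
    by (cases "w0 \<in> Poly_Mapping.keys p") (auto simp: not_in_keys_iff_lookup_eq_zero)
  finally show ?thesis .
qed

theorem lemma4p2:
  fixes k d n a b i j l :: nat
    and P :: "nat \<Rightarrow> cpoly" and p :: ncpoly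
    and vx vy :: "nat \<Rightarrow> nat \<Rightarrow> nat" and \<sigma> :: "nat \<times> nat \<Rightarrow> nat"
  assumes "k \<ge> 2"
    and "\<forall>m\<in>{1..k^2}. homogeneous (P m)"
    and "nc_representation k P p vx vy \<sigma>"
    and "nc_degree p = d" and "d > 1"
    and "a < k" and "b < k" and "a \<noteq> b"
    and "vx a a = i" and "vx a b = j" and "vx b b = l"
    and "n \<ge> 2" and "phi p n 0 \<noteq> 0"
  shows "(\<exists>!m. m \<in> {1..k^2}
            \<and> coeff (P m) (Poly_Mapping.single i (n - 1) + Poly_Mapping.single j 1) = phi p n 0
            \<and> coeff (P m) (Poly_Mapping.single j 1 + Poly_Mapping.single l (n - 1)) = phi p n 0)
       \<and> coeff (P (\<sigma> (a, b))) (Poly_Mapping.single i (n - 1) + Poly_Mapping.single j 1) = phi p n 0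
       \<and> coeff (P (\<sigma> (a, b))) (Poly_Mapping.single j 1 + Poly_Mapping.single l (n - 1)) = phi p n 0"
proof -
  note rep = assms(3)[unfolded nc_representation_def]
  have inj: "inj_on (\<lambda>(b, r, s). if b then vx r s else vy r s) (UNIV \<times> {..<k} \<times> {..<k})"
    using rep bij_betw_imp_inj_on by blast
  have bs: "bij_betw \<sigma> ({..<k} \<times> {..<k}) {1..k^2}" using rep by blast
  have ev: "\<And>r s. r < k \<Longrightarrow> s < k \<Longrightarrow> nc_eval k p (\<lambda>r s. cvar (vx r s)) (\<lambda>r s. cvar (vy r s)) r s = P (\<sigma> (r, s))"
    using rep by blast
  have ab: "a < k" "b < k" "a \<noteq> b" using assms by auto
  have nn: "Suc (n - 1) = n" using assms(12) by simp
  define M1 where "M1 = Poly_Mapping.single i (n - 1) + Poly_Mapping.single j 1"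
  define M2 where "M2 = Poly_Mapping.single j 1 + Poly_Mapping.single l (n - 1)"
  have c1: "coeff (P (\<sigma> (r, s))) M1 = (if r = a \<and> s = b then phi p n 0 else 0)" if "r < k" "s < k" for r s
  proof -
    have "coeff (P (\<sigma> (r, s))) M1 = Poly_Mapping.lookup (nc_eval k p (\<lambda>r s. cvar (vx r s)) (\<lambda>r s. cvar (vy r s)) r s) M1"
      using ev[OF that] by (simp add: coeff_def)
    also have "\<dots> = (if r = a \<and> s = b then Poly_Mapping.lookup p (replicate n True) else 0)"
      by (rule coeff_eval) (use lemB[OF inj ab that, of _ "n - 1"] in \<open>simp only: M1_def assms(9,10) nn\<close>)
    finally show ?thesis by (simp add: phi_eq)
  qed
  have c2: "coeff (P (\<sigma> (r, s))) M2 = (if r = a \<and> s = b then phi p n 0 else 0)" if "r < k" "s < k" for r s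
  proof -
    have "coeff (P (\<sigma> (r, s))) M2 = Poly_Mapping.lookup (nc_eval k p (\<lambda>r s. cvar (vx r s)) (\<lambda>r s. cvar (vy r s)) r s) M2"
      using ev[OF that] by (simp add: coeff_def)
    also have "\<dots> = (if r = a \<and> s = b then Poly_Mapping.lookup p (replicate n True) else 0)"
      by (rule coeff_eval) (use lemC[OF inj ab that, of _ "n - 1"] in \<open>simp only: M2_def assms(10,11) nn\<close>)
    finally show ?thesis by (simp add: phi_eq)
  qed
  have mem: "\<sigma> (a, b) \<in> {1..k^2}" using bs ab bij_betw_apply by fastforce
  have uniq: "m = \<sigma> (a, b)" if "m \<in> {1..k^2}" "coeff (P m) M1 = phi p n 0" for m
  proof -
    have "m \<in> \<sigma> ` ({..<k} \<times> {..<k})" using that(1) bs bij_betw_imp_surj_on by metis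
    then obtain r s where rs: "r < k" "s < k" "m = \<sigma> (r, s)" by auto
    then show ?thesis using c1[OF rs(1,2)] that(2) assms(13) by (auto split: if_splits)
  qed
  have c1ab: "coeff (P (\<sigma> (a, b))) M1 = phi p n 0" using c1[OF ab(1,2)] by simp
  have c2ab: "coeff (P (\<sigma> (a, b))) M2 = phi p n 0" using c2[OF ab(1,2)] by simp
  have ex: "\<exists>!m. m \<in> {1..k^2} \<and> coeff (P m) M1 = phi p n 0 \<and> coeff (P m) M2 = phi p n 0"
  proof (rule ex1I[of _ "\<sigma> (a, b)"])
    show "\<sigma> (a, b) \<in> {1..k^2} \<and> coeff (P (\<sigma> (a, b))) M1 = phi p n 0 \<and> coeff (P (\<sigma> (a, b))) M2 = phi p n 0"
      using mem c1ab c2ab by blast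
  next
    fix m assume "m \<in> {1..k^2} \<and> coeff (P m) M1 = phi p n 0 \<and> coeff (P m) M2 = phi p n 0"
    then show "m = \<sigma> (a, b)" using uniq by blast
  qed
  show ?thesis
    unfolding M1_def[symmetric] M2_def[symmetric]
    using ex c1ab c2ab by blast
qed

end
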